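(* Let $\|\cdot\|_W$ be the wedge norm on $\mathbb{R}^p$ and let $S_\star=\{1,\dots,s\}$ with $s\in\{1,\dots,p-1\}$. Then for all $\beta\in\mathbb{R}^p$, $$\|\beta_{S_\star^{c}}\|_W\le\sqrt{|S_\star|+1}\;\Omega^{S_\star^{c}}(\beta_{S_\star^{c}}),$$ i.e. the constant $C_{S_\star}$ can be taken equal to $\sqrt{|S_\star|+1}$.
   Context: Let $\mathcal{A}:=\{a\in\mathbb{R}^p: a_j>0\ \forall j,\ a_1\ge\dots\ge a_p\}$ and $\|\beta\|_W:=\inf_{a\in\mathcal{A}}\frac12\sum_{j=1}^p\big(\beta_j^2/a_j+a_j\big)$. For $S=\{1,\dots,s\}$, $\beta_{S^c}$ is the vector in $\mathbb{R}^p$ with entries $\beta_j1\{j\notin S\}$, $\mathcal{A}_{S^c}:=\{(a_j)_{j\in S^c}:a\in\mathcal{A}\}$ and $\Omega^{S^c}(\beta_{S^c}):=\inf_{a\in\mathcal{A}_{S^c}}\frac12\sum_{j\in S^c}\big(\beta_j^2/a_j+a_j\big)$. *)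

theory Defs
  imports Complex_Main
begin

text \<open>Vectors in R^p are represented as functions nat => real, with coordinates
indexed by {1..p}; values outside {1..p} are irrelevant.\<close>

definition wedge_set :: "nat \<Rightarrow> (nat \<Rightarrow> real) set" where
  "wedge_set p = {a. (\<forall>j\<in>{1..p}. a j > 0) \<and> (\<forall>i\<in>{1..p}. \<forall>j\<in>{1..p}. i \<le> j \<longrightarrow> a j \<le> a i)}"

definition wedge_norm :: "nat \<Rightarrow> (nat \<Rightarrow> real) \<Rightarrow> real" where
  "wedge_norm p \<beta> = Inf {(1/2) * (\<Sum>j=1..p. \<beta> j ^ 2 / a j + a j) | a. a \<in> wedge_set p}"

definition restrict_compl :: "nat \<Rightarrow> (nat \<Rightarrow> real) \<Rightarrow> (nat \<Rightarrow> real)" where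
  "restrict_compl s \<beta> = (\<lambda>j. if j \<in> {1..s} then 0 else \<beta> j)"

text \<open>Omega^{S^c}: infimum over A_{S^c} = restrictions of elements of A to S^c = {s+1..p};
the objective only depends on the restriction, so we take the infimum over a in A.\<close>
definition Omega_compl :: "nat \<Rightarrow> nat \<Rightarrow> (nat \<Rightarrow> real) \<Rightarrow> real" where
  "Omega_compl p s \<beta> = Inf {(1/2) * (\<Sum>j\<in>{s+1..p}. \<beta> j ^ 2 / a j + a j) | a. a \<in> wedge_set p}"

end

theory Submission
  imports Defs
begin

theorem lemma7:
  fixes p s :: nat and \<beta> :: "nat \<Rightarrow> real"
  assumes "1 \<le> s" and "s \<le> p - 1"
  shows "wedge_norm p (restrict_compl s \<beta>)
           \<le> sqrt (real s + 1) * Omega_compl p s (restrict_compl s \<beta>)"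
proof -
  define g where "g = restrict_compl s \<beta>"
  define r where "r = sqrt (real s + 1)"
  have r1: "r \<ge> 1" unfolding r_def by simp
  have rpos: "r > 0" using r1 by simp
  have r2: "r * r = real s + 1" unfolding r_def by simp
  have sp: "s + 1 \<le> p" using assms by linarith
  have g0: "\<And>j. j \<in> {1..s} \<Longrightarrow> g j = 0" unfolding g_def restrict_compl_def by simp
  have split: "{1..p} = {1..s} \<union> {s+1..p}" using sp by auto
  have bdd: "bdd_below {(1/2) * (\<Sum>j=1..p. g j ^ 2 / a j + a j) | a. a \<in> wedge_set p}"
  proof (rule bdd_belowI[of _ 0])
    fix x assume "x \<in> {(1/2) * (\<Sum>j=1..p. g j ^ 2 / a j + a j) | a. a \<in> wedge_set p}"
    then obtain a where a: "a \<in> wedge_set p" and x: "x = (1/2) * (\<Sum>j=1..p. g j ^ 2 / a j + a j)" by blast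
    have "\<forall>j\<in>{1..p}. 0 \<le> g j ^ 2 / a j + a j"
      proof
      fix j assume "j \<in> {1..p}"
      then have "a j > 0" using a unfolding wedge_set_def by auto
      then show "0 \<le> g j ^ 2 / a j + a j" by (simp add: add_nonneg_nonneg)
    qed
    then show "0 \<le> x" unfolding x by (metis (no_types, lifting) mult_nonneg_nonneg sum_nonneg zero_le_divide_1_iff zero_le_numeral)
  qed
  have key: "wedge_norm p g / r \<le> (1/2) * (\<Sum>j\<in>{s+1..p}. g j ^ 2 / a j + a j)"
    if a: "a \<in> wedge_set p" for a
  proof -
    have apos: "\<And>j. j \<in> {1..p} \<Longrightarrow> a j > 0" using a unfolding wedge_set_def by auto
    have amono: "\<And>i j. i \<in> {1..p} \<Longrightarrow> j \<in> {1..p} \<Longrightarrow> i \<le> j \<Longrightarrow> a j \<le> a i"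
      using a unfolding wedge_set_def by auto
    define b where "b = (\<lambda>j. (1/r) * (if j \<le> s then a (s+1) else a j))"
    have bw: "b \<in> wedge_set p"
      unfolding wedge_set_def b_def
    proof (intro CollectI conjI ballI impI)
      fix j assume "j \<in> {1..p}"
      then show "0 < 1 / r * (if j \<le> s then a (s + 1) else a j)"
        using apos[of j] apos[of "s+1"] sp rpos by auto
    next
      fix i j assume ij: "i \<in> {1..p}" "j \<in> {1..p}" "i \<le> j"
      have "(if j \<le> s then a (s + 1) else a j) \<le> (if i \<le> s then a (s + 1) else a i)"
        using ij amono[of i j] amono[of "s+1" j] sp by auto
      then show "1 / r * (if j \<le> s then a (s + 1) else a j) \<le> 1 / r * (if i \<le> s then a (s + 1) else a i)"
        using rpos by (simp add: divide_right_mono)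
    qed
    have W: "wedge_norm p g \<le> (1/2) * (\<Sum>j=1..p. g j ^ 2 / b j + b j)"
      unfolding wedge_norm_def by (rule cInf_lower[OF _ bdd]) (use bw in blast)
    have d: "{1..s} \<inter> {s+1..p} = {}" by auto
    have "(\<Sum>j=1..p. g j ^ 2 / b j + b j) = (\<Sum>j\<in>{1..s}. g j ^ 2 / b j + b j) + (\<Sum>j\<in>{s+1..p}. g j ^ 2 / b j + b j)"
      unfolding split by (rule sum.union_disjoint) (use d in auto)
    also have "(\<Sum>j\<in>{1..s}. g j ^ 2 / b j + b j) = real s * (a (s+1) / r)"
      using g0 by (simp add: b_def)
    also have "(\<Sum>j\<in>{s+1..p}. g j ^ 2 / b j + b j) = (\<Sum>j\<in>{s+1..p}. r * (g j ^ 2 / a j) + a j / r)"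
      by (rule sum.cong) (auto simp: b_def)
    also have "\<dots> = r * (\<Sum>j\<in>{s+1..p}. g j ^ 2 / a j) + (\<Sum>j\<in>{s+1..p}. a j) / r"
      by (simp add: sum.distrib sum_distrib_left sum_divide_distrib)
    finally have E: "(\<Sum>j=1..p. g j ^ 2 / b j + b j) = real s * (a (s+1) / r) + (r * (\<Sum>j\<in>{s+1..p}. g j ^ 2 / a j) + (\<Sum>j\<in>{s+1..p}. a j) / r)" .
    define Y where "Y = (\<Sum>j\<in>{s+1..p}. a j)"
    define X where "X = (\<Sum>j\<in>{s+1..p}. g j ^ 2 / a j)"
    have aY: "a (s+1) \<le> Y" unfolding Y_def
      by (rule member_le_sum) (use sp apos in \<open>auto intro: less_imp_le\<close>)
    have "real s * (a (s+1) / r) + Y / r \<le> (real s + 1) * Y / r"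
      proof -
      have "real s * a (s+1) \<le> real s * Y" using aY by (simp add: mult_left_mono)
      then have "real s * a (s+1) + Y \<le> (real s + 1) * Y" by (simp add: algebra_simps)
      then have "(real s * a (s+1) + Y) / r \<le> (real s + 1) * Y / r" using rpos by (simp add: divide_right_mono)
      then show ?thesis by (simp add: add_divide_distrib)
    qed
    also have "\<dots> = r * Y" using r2 rpos by (simp add: field_simps)
    finally have "(\<Sum>j=1..p. g j ^ 2 / b j + b j) \<le> r * X + r * Y"
      using E unfolding X_def Y_def by linarith
    with W have "wedge_norm p g \<le> r * ((1/2) * (X + Y))" by (simp add: algebra_simps)
    then have "wedge_norm p g / r \<le> (1/2) * (X + Y)" using rpos by (simp add: divide_le_eq mult.commute)
    also have "X + Y = (\<Sum>j\<in>{s+1..p}. g j ^ 2 / a j + a j)" unfolding X_def Y_def by (simp add: sum.distrib)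
    finally show ?thesis .
  qed
  have ne: "{(1/2) * (\<Sum>j\<in>{s+1..p}. g j ^ 2 / a j + a j) | a. a \<in> wedge_set p} \<noteq> {}"
  proof -
    have "(\<lambda>_. 1) \<in> wedge_set p" unfolding wedge_set_def by simp
    then show ?thesis by blast
  qed
  have "wedge_norm p g / r \<le> Omega_compl p s g"
    unfolding Omega_compl_def by (rule cInf_greatest[OF ne]) (use key in blast)
  then have "wedge_norm p g \<le> r * Omega_compl p s g" using rpos by (simp add: divide_le_eq mult.commute)
  then show ?thesis unfolding g_def r_def .
qed

end
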